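(* Let $(\mathcal A,\cdot,\ast,D)$ be a special GDN-Poisson admissible algebra and define $x\circ y:=x\ast Dy$ for $x,y\in\mathcal A$. Then $(\mathcal A,\cdot,\circ)$ is a GDN-Poisson algebra.
   Context: A special GDN-Poisson admissible algebra $(\mathcal A,\cdot,\ast,D)$ is a vector space with bilinear products $\cdot,\ast$ and a linear map $D$ such that $(\mathcal A,\cdot)$ is commutative associative with unit $e$, $(\mathcal A,\ast)$ is commutative associative, and $(x\cdot y)\ast z=x\cdot(y\ast z)$, $D(x\ast y)=(Dx)\ast y+x\ast(Dy)$, $D(x\cdot y)=(Dx)\cdot y+x\cdot(Dy)-x\cdot y\cdot(De)$. A GDN-Poisson algebra is a vector space with bilinear products $\cdot,\circ$ such that $(\mathcal A,\cdot)$ is commutative associative with unit $e$, $x\circ(y\circ z)-(x\circ y)\circ z=y\circ(x\circ z)-(y\circ x)\circ z$, $(x\circ y)\circ z=(x\circ z)\circ y$, $(x\cdot y)\circ z=x\cdot(y\circ z)$, and $(x\circ y)\cdot z-x\circ(y\cdot z)=(y\circ x)\cdot z-y\circ(x\cdot z)$. *)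

theory Defs
  imports Complex_Main
begin

definition bilinear_prod :: "('k::field \<Rightarrow> 'a::ab_group_add \<Rightarrow> 'a) \<Rightarrow> ('a \<Rightarrow> 'a \<Rightarrow> 'a) \<Rightarrow> bool" where
  "bilinear_prod smul p \<longleftrightarrow>
     (\<forall>x. Vector_Spaces.linear smul smul (\<lambda>y. p x y)) \<and> (\<forall>y. Vector_Spaces.linear smul smul (\<lambda>x. p x y))"

definition special_GDN_Poisson_admissible ::
  "('k::field \<Rightarrow> 'a::ab_group_add \<Rightarrow> 'a) \<Rightarrow> ('a \<Rightarrow> 'a \<Rightarrow> 'a) \<Rightarrow> ('a \<Rightarrow> 'a \<Rightarrow> 'a) \<Rightarrow> ('a \<Rightarrow> 'a) \<Rightarrow> bool" where
  "special_GDN_Poisson_admissible smul dot ast D \<longleftrightarrow>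
     vector_space smul \<and> bilinear_prod smul dot \<and> bilinear_prod smul ast \<and> Vector_Spaces.linear smul smul D \<and>
     (\<forall>x y. dot x y = dot y x) \<and> (\<forall>x y z. dot (dot x y) z = dot x (dot y z)) \<and>
     (\<exists>e. \<forall>x. dot e x = x) \<and>
     (\<forall>x y. ast x y = ast y x) \<and> (\<forall>x y z. ast (ast x y) z = ast x (ast y z)) \<and>
     (\<forall>x y z. ast (dot x y) z = dot x (ast y z)) \<and>
     (\<forall>x y. D (ast x y) = ast (D x) y + ast x (D y)) \<and>
     (\<forall>e. (\<forall>x. dot e x = x) \<longrightarrow>
        (\<forall>x y. D (dot x y) = dot (D x) y + dot x (D y) - dot (dot x y) (D e)))"

definition GDN_Poisson ::
  "('k::field \<Rightarrow> 'a::ab_group_add \<Rightarrow> 'a) \<Rightarrow> ('a \<Rightarrow> 'a \<Rightarrow> 'a) \<Rightarrow> ('a \<Rightarrow> 'a \<Rightarrow> 'a) \<Rightarrow> bool" where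
  "GDN_Poisson smul dot circ \<longleftrightarrow>
     vector_space smul \<and> bilinear_prod smul dot \<and> bilinear_prod smul circ \<and>
     (\<forall>x y. dot x y = dot y x) \<and> (\<forall>x y z. dot (dot x y) z = dot x (dot y z)) \<and>
     (\<exists>e. \<forall>x. dot e x = x) \<and>
     (\<forall>x y z. circ x (circ y z) - circ (circ x y) z = circ y (circ x z) - circ (circ y x) z) \<and>
     (\<forall>x y z. circ (circ x y) z = circ (circ x z) y) \<and>
     (\<forall>x y z. circ (dot x y) z = dot x (circ y z)) \<and>
     (\<forall>x y z. dot (circ x y) z - circ x (dot y z) = dot (circ y x) z - circ y (dot x z))"

end

theory Submission
  imports Defs
begin

lemma lin_add: "Vector_Spaces.linear s s f \<Longrightarrow> f (a + b) = f a + f b"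
  by (metis linear_iff_module_hom module_hom.add)
lemma lin_diff: "Vector_Spaces.linear s s f \<Longrightarrow> f (a - b) = f a - f b"
  by (metis linear_iff_module_hom module_hom.diff)

lemma comp_lin:
  assumes "Vector_Spaces.linear s s f" "Vector_Spaces.linear s s g"
  shows "Vector_Spaces.linear s s (\<lambda>x. f (g x))"
proof -
  have "Vector_Spaces.linear s s (f \<circ> g)" using assms(2,1) by (rule Vector_Spaces.linear_compose)
  thus ?thesis by (simp add: comp_def)
qed

theorem mainTheorem3:
  fixes smul :: "'k::field \<Rightarrow> 'a::ab_group_add \<Rightarrow> 'a"
    and dot ast :: "'a \<Rightarrow> 'a \<Rightarrow> 'a" and D :: "'a \<Rightarrow> 'a"
  assumes "special_GDN_Poisson_admissible smul dot ast D"
  shows "GDN_Poisson smul dot (\<lambda>x y. ast x (D y))"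
proof -
  note A = assms[unfolded special_GDN_Poisson_admissible_def]
  have vs: "vector_space smul" and bd: "bilinear_prod smul dot" and ba: "bilinear_prod smul ast"
    and lD: "Vector_Spaces.linear smul smul D"
    and dc: "\<And>x y. dot x y = dot y x" and da: "\<And>x y z. dot (dot x y) z = dot x (dot y z)"
    and ac: "\<And>x y. ast x y = ast y x" and aa: "\<And>x y z. ast (ast x y) z = ast x (ast y z)"
    and mix: "\<And>x y z. ast (dot x y) z = dot x (ast y z)"
    and Dast: "\<And>x y. D (ast x y) = ast (D x) y + ast x (D y)"
    using A by auto
  obtain e where e: "\<And>x. dot e x = x" using A by auto
  have Ddot: "\<And>x y. D (dot x y) = dot (D x) y + dot x (D y) - dot (dot x y) (D e)"
    using A e by blast
  have lin_dr: "\<And>x. Vector_Spaces.linear smul smul (\<lambda>y. dot x y)"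
   and lin_dl: "\<And>y. Vector_Spaces.linear smul smul (\<lambda>x. dot x y)"
   and lin_ar: "\<And>x. Vector_Spaces.linear smul smul (\<lambda>y. ast x y)"
   and lin_al: "\<And>y. Vector_Spaces.linear smul smul (\<lambda>x. ast x y)"
    using bd ba unfolding bilinear_prod_def by auto
  have dr_add: "\<And>x a b. dot x (a + b) = dot x a + dot x b" using lin_add[OF lin_dr] .
  have dr_diff: "\<And>x a b. dot x (a - b) = dot x a - dot x b" using lin_diff[OF lin_dr] .
  have ar_add: "\<And>x a b. ast x (a + b) = ast x a + ast x b" using lin_add[OF lin_ar] .
  have ar_diff: "\<And>x a b. ast x (a - b) = ast x a - ast x b" using lin_diff[OF lin_ar] .
  define c where "c = ast e e"
  have astdot: "\<And>a b. ast a b = dot a (dot b c)"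
  proof -
    fix a b
    have "ast a b = ast (dot a e) b" using e dc by metis
    also have "\<dots> = dot a (ast e b)" by (rule mix)
    also have "ast e b = ast b e" by (rule ac)
    also have "ast b e = ast (dot b e) e" using e dc by metis
    also have "\<dots> = dot b c" unfolding c_def by (rule mix)
    finally show "ast a b = dot a (dot b c)" .
  qed
  have dc2: "\<And>x y z. dot x (dot y z) = dot y (dot x z)" using dc da by metis
  note DS = da dc2 dc
  have bc: "bilinear_prod smul (\<lambda>x y. ast x (D y))"
    unfolding bilinear_prod_def using comp_lin[OF lin_ar lD] lin_al by auto
  have g1: "\<And>x y z. ast x (D (ast y (D z))) - ast (ast x (D y)) (D z)
      = ast y (D (ast x (D z))) - ast (ast y (D x)) (D z)"
  proof -
    fix x y z
    have k: "\<And>x y. ast x (D (ast y (D z))) - ast (ast x (D y)) (D z) = ast x (ast y (D (D z)))"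
      by (simp add: Dast ar_add aa)
    show "?thesis x y z" unfolding k using aa ac by metis
  qed
  have g2: "\<And>x y z. ast (ast x (D y)) (D z) = ast (ast x (D z)) (D y)"
    using aa ac by metis
  have g3: "\<And>x y z. ast (dot x y) (D z) = dot x (ast y (D z))" by (rule mix)
  have g4: "\<And>x y z. dot (ast x (D y)) z - ast x (D (dot y z))
       = dot (ast y (D x)) z - ast y (D (dot x z))"
  proof -
    fix x y z
    have k: "\<And>x y. dot (ast x (D y)) z - ast x (D (dot y z))
        = dot x (dot y (dot (dot z (D e)) c)) - dot x (dot y (dot (D z) c))"
      by (simp add: astdot Ddot dr_add dr_diff DS algebra_simps)
    show "?thesis x y z" unfolding k using DS by metis
  qed
  show ?thesis unfolding GDN_Poisson_def
    using vs bd bc dc da e g1 g2 g3 g4 by blast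
qed

end
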